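(* Let $\alpha<_c\beta$ with $\beta/\!\!/\alpha$ an nc border strip with $n$ boxes, and let $w\in CRHW_n$ satisfy $w(\alpha)=\beta$. If $j\in SE(\beta/\!\!/\alpha)$, then $j\notin\mathrm{leg}(w)$.
   Context: A composition is a finite sequence $\alpha=(\alpha_1,\dots,\alpha_k)$ of positive integers; $\ell(\alpha)=k$; its diagram is the set of boxes $(i,j)$, $1\le i\le\ell(\alpha)$, $1\le j\le\alpha_i$, rows top to bottom, columns left to right. For compositions $\gamma=(\gamma_1,\dots,\gamma_l)$, $\delta$ write $\gamma\lessdot_c\delta$ if $\delta=(1,\gamma_1,\dots,\gamma_l)$ or $\delta=(\gamma_1,\dots,\gamma_k+1,\dots,\gamma_l)$ with $\gamma_i\ne\gamma_k$ for all $i<k$; $<_c$ is the transitive closure. For $\gamma<_c\delta$, $\delta/\!\!/\gamma$ consists of the boxes of $\delta$ other than $(\ell(\delta)-\ell(\gamma)+i,j)$, $1\le i\le\ell(\gamma)$, $1\le j\le\gamma_i$. $\mathrm{supp}(\beta/\!\!/\alpha)$ is the set of columns containing a box of $\beta/\!\!/\alpha$; interval shape: supp is a set of consecutive integers. nc border strip: an interval shape such that (1) if $(i,1),(i,2)\in\beta/\!\!/\alpha$ then $(i,1)$ is the bottommost box of column 1 of $\beta/\!\!/\alpha$, and (2) if $(i,j),(i,j+1)\in\beta/\!\!/\alpha$ with $j\ge2$ then $(i,j)$ is the topmost box of column $j$ of $\beta/\!\!/\alpha$. $E(\beta/\!\!/\alpha)$ is the set of $j$ such that $(i,j),(i,j+1)\in\beta/\!\!/\alpha$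 for some $i$; $SE(\beta/\!\!/\alpha)$ is the set of $j\notin E(\beta/\!\!/\alpha)$ for which there are boxes $(i,j),(i',j+1)\in\beta/\!\!/\alpha$ with $i'>i$. Box-adding operators: $\mathfrak t_1(\alpha)=(1,\alpha_1,\dots,\alpha_k)$; for $i\ge2$, $\mathfrak t_i(\alpha)$ increases the leftmost part equal to $i-1$ by $1$, and is $0$ if none; $\mathfrak t_i(0)=0$. A word $w=\mathfrak t_{i_1}\cdots\mathfrak t_{i_n}$ acts by $w(\alpha)=\mathfrak t_{i_1}(\cdots\mathfrak t_{i_n}(\alpha))$; it is a reverse $k$-hookword if $i_1\le\cdots\le i_{k+1}>i_{k+2}>\cdots>i_n$, with $\mathrm{leg}(w)=\{i_{k+1},\dots,i_n\}$; connected if $\{i_1,\dots,i_n\}$ is a set of consecutive integers; $CRHW_n$ is the set of connected reverse hookwords of length $n$. *)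

theory Defs
  imports Main
begin

text \<open>Compositions are lists of positive naturals; rows/columns are 1-indexed.\<close>

definition is_composition :: "nat list \<Rightarrow> bool" where
  "is_composition \<alpha> \<longleftrightarrow> (\<forall>x\<in>set \<alpha>. 0 < x)"

definition incr_at :: "nat \<Rightarrow> nat list \<Rightarrow> nat list" where
  "incr_at k \<gamma> = \<gamma>[k := \<gamma> ! k + 1]"

definition ccover :: "nat list \<Rightarrow> nat list \<Rightarrow> bool" where
  "ccover \<gamma> \<delta> \<longleftrightarrow>
     \<delta> = 1 # \<gamma> \<or>
     (\<exists>k < length \<gamma>. \<delta> = incr_at k \<gamma> \<and> (\<forall>i < k. \<gamma> ! i \<noteq> \<gamma> ! k))"

definition cless :: "nat list \<Rightarrow> nat list \<Rightarrow> bool" where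
  "cless = tranclp ccover"

definition diagram :: "nat list \<Rightarrow> (nat \<times> nat) set" where
  "diagram \<alpha> = {(i, j). 1 \<le> i \<and> i \<le> length \<alpha> \<and> 1 \<le> j \<and> j \<le> \<alpha> ! (i - 1)}"

definition skew :: "nat list \<Rightarrow> nat list \<Rightarrow> (nat \<times> nat) set" where
  "skew \<delta> \<gamma> = diagram \<delta> -
     {(length \<delta> - length \<gamma> + i, j) | i j. 1 \<le> i \<and> i \<le> length \<gamma> \<and> 1 \<le> j \<and> j \<le> \<gamma> ! (i - 1)}"

definition supp :: "(nat \<times> nat) set \<Rightarrow> nat set" where
  "supp S = snd ` S"

definition interval_shape :: "(nat \<times> nat) set \<Rightarrow> bool" where
  "interval_shape S \<longleftrightarrow>
     (\<forall>a b c. a \<in> supp S \<longrightarrow> c \<in> supp S \<longrightarrow> a \<le> b \<longrightarrow> b \<le> c \<longrightarrow> b \<in> supp S)"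

definition nc_border_strip :: "(nat \<times> nat) set \<Rightarrow> bool" where
  "nc_border_strip S \<longleftrightarrow> interval_shape S \<and>
     (\<forall>i. (i, 1) \<in> S \<and> (i, 2) \<in> S \<longrightarrow> (\<forall>i'. (i', 1) \<in> S \<longrightarrow> i' \<le> i)) \<and>
     (\<forall>i j. 2 \<le> j \<and> (i, j) \<in> S \<and> (i, j + 1) \<in> S \<longrightarrow> (\<forall>i'. (i', j) \<in> S \<longrightarrow> i \<le> i'))"

definition Eset :: "(nat \<times> nat) set \<Rightarrow> nat set" where
  "Eset S = {j. \<exists>i. (i, j) \<in> S \<and> (i, j + 1) \<in> S}"

definition SEset :: "(nat \<times> nat) set \<Rightarrow> nat set" where
  "SEset S = {j. j \<notin> Eset S \<and> (\<exists>i i'. (i, j) \<in> S \<and> (i', j + 1) \<in> S \<and> i < i')}"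

text \<open>Box-adding operators; None plays the role of 0.  There is no operator t_0.\<close>
fun top_op :: "nat \<Rightarrow> nat list option \<Rightarrow> nat list option" where
  "top_op i None = None"
| "top_op i (Some \<alpha>) =
     (if i = 0 then None
      else if i = 1 then Some (1 # \<alpha>)
      else if (i - 1) \<in> set \<alpha> then Some (incr_at (LEAST k. \<alpha> ! k = i - 1) \<alpha>)
      else None)"

text \<open>w = t_{i_1} ... t_{i_n} acts by applying t_{i_n} first.\<close>
definition word_act :: "nat list \<Rightarrow> nat list \<Rightarrow> nat list option" where
  "word_act w \<alpha> = foldr top_op w (Some \<alpha>)"

text \<open>Reverse k-hookword (0-based list positions: entries 0..k weakly increasing,
  entries k..n-1 strictly decreasing).\<close>
definition rev_hookword :: "nat \<Rightarrow> nat list \<Rightarrow> bool" where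
  "rev_hookword k w \<longleftrightarrow> k < length w \<and> sorted (take (Suc k) w) \<and>
     sorted_wrt (>) (drop k w)"

definition is_rev_hookword :: "nat list \<Rightarrow> bool" where
  "is_rev_hookword w \<longleftrightarrow> (\<exists>k. rev_hookword k w)"

definition leg :: "nat list \<Rightarrow> nat set" where
  "leg w = set (drop (THE k. rev_hookword k w) w)"

definition connected_word :: "nat list \<Rightarrow> bool" where
  "connected_word w \<longleftrightarrow>
     (\<forall>a b c. a \<in> set w \<longrightarrow> c \<in> set w \<longrightarrow> a \<le> b \<longrightarrow> b \<le> c \<longrightarrow> b \<in> set w)"

definition CRHW :: "nat \<Rightarrow> nat list set" where
  "CRHW n = {w. length w = n \<and> is_rev_hookword w \<and> connected_word w}"

end

theory Submission
  imports Defs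
begin

definition Lf :: "nat list \<Rightarrow> nat \<Rightarrow> nat" where
  "Lf g b = (if b < length g then rev g ! b else 0)"

lemma top_op_step:
  assumes "top_op c (Some g) = Some d"
  shows "\<exists>b. Lf g b = c - 1 \<and> Lf d = (Lf g)(b := c) \<and> 1 \<le> c \<and> length g \<le> length d \<and>
     (2 \<le> c \<longrightarrow> (\<forall>b'>b. Lf g b' \<noteq> c - 1)) \<and> (c = 1 \<longrightarrow> (\<forall>b'>b. Lf g b' = 0))"
proof (cases "c = 0")
  case True then show ?thesis using assms by simp
next
  case c0: False
  show ?thesis
  proof (cases "c = 1")
    case True
    then have d: "d = 1 # g" using assms by simp
    show ?thesis
    proof (rule exI[of _ "length g"], intro conjI)
      show "Lf d = (Lf g)(length g := c)"
      proof
        fix x show "Lf d x = ((Lf g)(length g := c)) x"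
          using True by (auto simp: d Lf_def nth_append)
      qed
    qed (auto simp: Lf_def True d)
  next
    case False
    with c0 have c2: "2 \<le> c" by simp
    have mem: "c - 1 \<in> set g" using assms c2 by (auto split: if_splits)
    define k where "k = (LEAST k. g ! k = c - 1)"
    obtain k0 where k0: "k0 < length g" "g ! k0 = c - 1" using mem by (auto simp: in_set_conv_nth)
    have gk: "g ! k = c - 1" unfolding k_def by (rule LeastI[of _ k0]) (rule k0(2))
    have kle: "k \<le> k0" unfolding k_def by (rule Least_le) (rule k0(2))
    have klt: "k < length g" using kle k0 by simp
    have nk: "\<And>k'. k' < k \<Longrightarrow> g ! k' \<noteq> c - 1" unfolding k_def using not_less_Least by blast
    have d: "d = incr_at k g" using assms c2 mem by (simp add: k_def)
    define b where "b = length g - Suc k"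
    show ?thesis
    proof (rule exI[of _ b], intro conjI impI allI)
      show "Lf g b = c - 1" using klt gk by (simp add: Lf_def b_def rev_nth)
      show "Lf d = (Lf g)(b := c)"
      proof
        fix x show "Lf d x = ((Lf g)(b := c)) x"
          using klt gk c2 by (auto simp: d incr_at_def Lf_def rev_nth b_def nth_list_update)
      qed
      show "length g \<le> length d" by (simp add: d incr_at_def)
      fix b' assume "b < b'"
      then show "Lf g b' \<noteq> c - 1" using nk c2 klt
        by (auto simp: Lf_def rev_nth b_def)
    qed (use c2 in auto)
  qed
qed

definition st :: "nat list \<Rightarrow> nat list \<Rightarrow> nat \<Rightarrow> nat list option" where
  "st a u m = fold top_op (take m u) (Some a)"

definition LL :: "nat list \<Rightarrow> nat list \<Rightarrow> nat \<Rightarrow> nat \<Rightarrow> nat" where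
  "LL a u m = Lf (the (st a u m))"

lemma st_Suc: "m < length u \<Longrightarrow> st a u (Suc m) = top_op (u ! m) (st a u m)"
  by (simp add: st_def take_Suc_conv_app_nth)

lemma st_0: "st a u 0 = Some a" by (simp add: st_def)

lemma st_None: "st a u m = None \<Longrightarrow> m \<le> m' \<Longrightarrow> m' \<le> length u \<Longrightarrow> st a u m' = None"
proof (induction m' rule: nat_induct)
  case 0 then show ?case by simp
next
  case (Suc x)
  show ?case
  proof (cases "m = Suc x")
    case True then show ?thesis using Suc by simp
  next
    case False
    then have "st a u x = None" using Suc by simp
    then show ?thesis using Suc by (simp add: st_Suc)
  qed
qed

lemma st_Some: assumes "st a u (length u) \<noteq> None" "m \<le> length u"
  shows "st a u m = Some (the (st a u m))"
  using st_None[of a u m "length u"] assms by (cases "st a u m") auto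

lemma LL_step:
  assumes fin: "st a u (length u) \<noteq> None" and m: "m < length u"
  shows "\<exists>b. LL a u m b = u!m - 1 \<and> LL a u (Suc m) = (LL a u m)(b := u!m) \<and> 1 \<le> u!m \<and>
     (2 \<le> u!m \<longrightarrow> (\<forall>b'>b. LL a u m b' \<noteq> u!m - 1)) \<and> (u!m = 1 \<longrightarrow> (\<forall>b'>b. LL a u m b' = 0))"
proof -
  have s1: "st a u m = Some (the (st a u m))" using st_Some[OF fin] m by simp
  have s2: "st a u (Suc m) = Some (the (st a u (Suc m)))" using st_Some[OF fin] m by simp
  have "top_op (u!m) (Some (the (st a u m))) = Some (the (st a u (Suc m)))"
    using s1 s2 st_Suc[OF m, of a] by simp
  from top_op_step[OF this] show ?thesis unfolding LL_def by blast
qed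

lemma LL_mono1:
  assumes fin: "st a u (length u) \<noteq> None" and m: "m < length u"
  shows "LL a u m b \<le> LL a u (Suc m) b"
  using LL_step[OF fin m] by (metis diff_le_self fun_upd_apply order_refl)

lemma LL_mono:
  assumes fin: "st a u (length u) \<noteq> None"
  shows "m \<le> m' \<Longrightarrow> m' \<le> length u \<Longrightarrow> LL a u m b \<le> LL a u m' b"
proof (induction m' rule: nat_induct)
  case 0 then show ?case by simp
next
  case (Suc x)
  show ?case
  proof (cases "m = Suc x")
    case True then show ?thesis by simp
  next
    case False
    then have "LL a u m b \<le> LL a u x b" using Suc by simp
    also have "\<dots> \<le> LL a u (Suc x) b" using LL_mono1[OF fin] Suc by simp
    finally show ?thesis .
  qed
qed

lemma LL_cross:
  assumes fin: "st a u (length u) \<noteq> None"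
  shows "m0 \<le> c \<Longrightarrow> c \<le> length u \<Longrightarrow> LL a u m0 b < v \<Longrightarrow> v \<le> LL a u c b \<Longrightarrow>
    \<exists>m. m0 \<le> m \<and> m < c \<and> u!m = v \<and> LL a u m b = v - 1 \<and> LL a u (Suc m) b = v \<and>
     (2 \<le> v \<longrightarrow> (\<forall>b'>b. LL a u m b' \<noteq> v - 1)) \<and> (v = 1 \<longrightarrow> (\<forall>b'>b. LL a u m b' = 0))"
proof (induction c rule: nat_induct)
  case 0 then show ?case by simp
next
  case (Suc x)
  show ?case
  proof (cases "v \<le> LL a u x b \<and> m0 \<le> x")
    case True
    then obtain m where "m0 \<le> m \<and> m < x \<and> u!m = v \<and> LL a u m b = v - 1 \<and> LL a u (Suc m) b = v \<and>
     (2 \<le> v \<longrightarrow> (\<forall>b'>b. LL a u m b' \<noteq> v - 1)) \<and> (v = 1 \<longrightarrow> (\<forall>b'>b. LL a u m b' = 0))"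
      using Suc by auto
    then show ?thesis by (intro exI[of _ m]) auto
  next
    case False
    have x: "x < length u" using Suc by simp
    have m0x: "m0 \<le> x" using Suc False by (cases "m0 = Suc x") auto
    with False have lt: "LL a u x b < v" by simp
    obtain b0 where b0: "LL a u x b0 = u!x - 1" "LL a u (Suc x) = (LL a u x)(b0 := u!x)" "1 \<le> u!x"
      "(2 \<le> u!x \<longrightarrow> (\<forall>b'>b0. LL a u x b' \<noteq> u!x - 1))" "(u!x = 1 \<longrightarrow> (\<forall>b'>b0. LL a u x b' = 0))"
      using LL_step[OF fin x] by blast
    have "b0 = b"
    proof (rule ccontr)
      assume "b0 \<noteq> b"
      then have "LL a u (Suc x) b = LL a u x b" using b0(2) by simp
      then show False using lt Suc.prems by simp
    qed
    then have "LL a u (Suc x) b = u!x" using b0(2) by simp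
    then have v: "v = u!x" using lt Suc.prems b0(1) b0(3) \<open>b0 = b\<close> by simp
    show ?thesis
      by (rule exI[of _ x]) (use m0x v b0 \<open>b0 = b\<close> \<open>LL a u (Suc x) b = u!x\<close> in auto)
  qed
qed

lemma skew_iff:
  assumes "length a \<le> length c"
  shows "(i,j) \<in> skew c a \<longleftrightarrow> 1 \<le> i \<and> i \<le> length c \<and> Lf a (length c - i) < j \<and> j \<le> Lf c (length c - i)"
proof -
  have A: "(i,j) \<in> {(length c - length a + i0, j0) | i0 j0. 1 \<le> i0 \<and> i0 \<le> length a \<and> 1 \<le> j0 \<and> j0 \<le> a ! (i0 - 1)}
     \<longleftrightarrow> (1 \<le> i \<and> i \<le> length c \<and> length c - i < length a \<and> 1 \<le> j \<and> j \<le> Lf a (length c - i))" (is "?L \<longleftrightarrow> ?R")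
  proof
    assume ?L
    then obtain i0 where "i = length c - length a + i0" "1 \<le> i0" "i0 \<le> length a" "1 \<le> j" "j \<le> a ! (i0 - 1)" by blast
    then show ?R using assms by (auto simp: Lf_def rev_nth)
  next
    assume R: ?R
    show ?L
    proof (rule CollectI, rule exI[of _ "i - (length c - length a)"], rule exI[of _ j])
      show "(i, j) = (length c - length a + (i - (length c - length a)), j) \<and>
        1 \<le> i - (length c - length a) \<and> i - (length c - length a) \<le> length a \<and> 1 \<le> j \<and> j \<le> a ! (i - (length c - length a) - 1)"
        using R assms by (auto simp: Lf_def rev_nth ac_simps)
    qed
  qed
  have B: "(i,j) \<in> diagram c \<longleftrightarrow> 1 \<le> i \<and> i \<le> length c \<and> 1 \<le> j \<and> j \<le> Lf c (length c - i)"
    by (auto simp: diagram_def Lf_def rev_nth)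
  show ?thesis unfolding skew_def using A B by (auto simp: Lf_def)
qed

lemma Lf_len: assumes "\<And>b. Lf a b \<le> Lf c b" "is_composition a" shows "length a \<le> length c"
proof (cases a)
  case Nil then show ?thesis by simp
next
  case (Cons x xs)
  have "0 < Lf a (length a - 1)" using assms(2) Cons by (auto simp: Lf_def rev_nth is_composition_def nth_append)
  then have "0 < Lf c (length a - 1)" using assms(1) by (metis leD le_neq_implies_less not_gr_zero)
  then show ?thesis by (auto simp: Lf_def split: if_splits)
qed

lemma hook_unique: assumes "rev_hookword k w" "rev_hookword k' w" shows "k = k'"
proof (rule ccontr)
  assume "k \<noteq> k'"
  then consider "k < k'" | "k' < k" by linarith
  then show False
  proof cases
    case 1
    have "w ! k \<le> w ! Suc k"
    proof -
      have s: "sorted (take (Suc k') w)" "k' < length w" using assms(2) unfolding rev_hookword_def by auto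
      have "take (Suc k') w ! k \<le> take (Suc k') w ! Suc k" by (rule sorted_nth_mono[OF s(1)]) (use 1 s in auto)
      then show ?thesis using 1 by simp
    qed
    moreover have "w ! k > w ! Suc k"
    proof -
      have "Suc k < length w" using assms(2) 1 unfolding rev_hookword_def by simp
      then have "drop k w ! 0 > drop k w ! 1" using assms(1) unfolding rev_hookword_def
        using sorted_wrt_nth_less[of "(>)" "drop k w" 0 1] by simp
      then show ?thesis using \<open>Suc k < length w\<close> by simp
    qed
    ultimately show False by simp
  next
    case 2
    have "w ! k' \<le> w ! Suc k'"
    proof -
      have s: "sorted (take (Suc k) w)" "k < length w" using assms(1) unfolding rev_hookword_def by auto
      have "take (Suc k) w ! k' \<le> take (Suc k) w ! Suc k'" by (rule sorted_nth_mono[OF s(1)]) (use 2 s in auto)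
      then show ?thesis using 2 by simp
    qed
    moreover have "w ! k' > w ! Suc k'"
    proof -
      have "Suc k' < length w" using assms(1) 2 unfolding rev_hookword_def by simp
      then have "drop k' w ! 0 > drop k' w ! 1" using assms(2) unfolding rev_hookword_def
        using sorted_wrt_nth_less[of "(>)" "drop k' w" 0 1] by simp
      then show ?thesis using \<open>Suc k' < length w\<close> by simp
    qed
    ultimately show False by simp
  qed
qed

lemma leg_eq: "rev_hookword k w \<Longrightarrow> leg w = set (drop k w)"
  unfolding leg_def using hook_unique by (metis the_equality)

lemma leg_pos: assumes "rev_hookword k w" "j \<in> leg w"
  shows "\<exists>T. T < length w - k \<and> rev w ! T = j"
proof -
  from assms have "j \<in> set (drop k w)" by (simp add: leg_eq)
  then obtain q where q: "q < length w - k" "drop k w ! q = j" by (auto simp: in_set_conv_nth)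
  show ?thesis
    by (rule exI[of _ "length w - k - Suc q"]) (use q in \<open>auto simp: rev_nth\<close>)
qed

lemma leg_inc: assumes "rev_hookword k w" "m < m'" "m' < length w - k"
  shows "rev w ! m < rev w ! m'"
proof -
  have sw: "sorted_wrt (>) (drop k w)" using assms(1) by (simp add: rev_hookword_def)
  have "drop k w ! (length w - k - Suc m') > drop k w ! (length w - k - Suc m)"
    using sorted_wrt_nth_less[OF sw, of "length w - k - Suc m'" "length w - k - Suc m"] assms(2,3) by simp
  moreover have "k + (length w - k - Suc m') = length w - Suc m'" "k + (length w - k - Suc m) = length w - Suc m"
    using assms by auto
  ultimately show ?thesis using assms by (simp add: rev_nth)
qed

lemma arm_dec: assumes "rev_hookword k w" "length w - k \<le> m" "m < m'" "m' < length w"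
  shows "rev w ! m' \<le> rev w ! m"
proof -
  have st: "sorted (take (Suc k) w)" using assms(1) by (simp add: rev_hookword_def)
  have "take (Suc k) w ! (length w - Suc m') \<le> take (Suc k) w ! (length w - Suc m)"
    by (rule sorted_nth_mono[OF st]) (use assms in auto)
  then show ?thesis using assms by (simp add: rev_nth)
qed

theorem mainTheorem13:
  fixes \<alpha> \<beta> w :: "nat list" and n j :: nat
  assumes "is_composition \<alpha>" and "is_composition \<beta>"
    and "cless \<alpha> \<beta>"
    and "nc_border_strip (skew \<beta> \<alpha>)"
    and "card (skew \<beta> \<alpha>) = n"
    and "w \<in> CRHW n"
    and "word_act w \<alpha> = Some \<beta>"
    and "j \<in> SEset (skew \<beta> \<alpha>)"
  shows "j \<notin> leg w"
proof
  assume jleg: "j \<in> leg w"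
  define u where "u = rev w"
  define L where "L = LL \<alpha> u"
  define N where "N = length u"
  have stN: "st \<alpha> u N = Some \<beta>" using assms(7)
    by (simp add: st_def u_def N_def word_act_def foldr_conv_fold)
  have fin: "st \<alpha> u (length u) \<noteq> None" using stN N_def by simp
  have L0: "L 0 = Lf \<alpha>" by (simp add: L_def LL_def st_0)
  have LN: "L N = Lf \<beta>" by (simp add: L_def LL_def stN)
  have mono: "\<And>m m' b. m \<le> m' \<Longrightarrow> m' \<le> N \<Longrightarrow> L m b \<le> L m' b"
    unfolding L_def N_def using LL_mono[OF fin] by blast
  have lenab: "length \<alpha> \<le> length \<beta>"
    by (rule Lf_len[OF _ assms(1)]) (use mono[of 0 N] L0 LN in auto)
  have Siff: "\<And>i j. (i,j) \<in> skew \<beta> \<alpha> \<longleftrightarrow> 1 \<le> i \<and> i \<le> length \<beta> \<and> Lf \<alpha> (length \<beta> - i) < j \<and> j \<le> Lf \<beta> (length \<beta> - i)"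
    using skew_iff[OF lenab] by blast
  obtain k where hk: "rev_hookword k w" using assms(6) by (auto simp: CRHW_def is_rev_hookword_def)
  define p where "p = N - k"
  have inc: "\<And>m m'. m < m' \<Longrightarrow> m' < p \<Longrightarrow> u!m < u!m'"
    unfolding u_def p_def N_def using leg_inc[OF hk] by simp
  have dec: "\<And>m m'. p \<le> m \<Longrightarrow> m < m' \<Longrightarrow> m' < N \<Longrightarrow> u!m' \<le> u!m"
    unfolding u_def p_def N_def using arm_dec[OF hk] by simp
  have pN: "p \<le> N" by (simp add: p_def)
  obtain T0 where T0: "T0 < p" "u!T0 = j" using leg_pos[OF hk jleg] unfolding u_def p_def N_def by auto
  from assms(8) obtain i i' where jE: "j \<notin> Eset (skew \<beta> \<alpha>)" and
    b1: "(i,j) \<in> skew \<beta> \<alpha>" and b2: "(i', j+1) \<in> skew \<beta> \<alpha>" and ii: "i < i'"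
    unfolding SEset_def by blast
  have notE: "\<And>b. Lf \<alpha> b < j \<Longrightarrow> Lf \<beta> b \<le> j"
  proof (rule ccontr)
    fix b assume a: "Lf \<alpha> b < j" "\<not> Lf \<beta> b \<le> j"
    then have bl: "b < length \<beta>" by (auto simp: Lf_def split: if_splits)
    have "(length \<beta> - b, j) \<in> skew \<beta> \<alpha>" "(length \<beta> - b, j + 1) \<in> skew \<beta> \<alpha>"
      using a bl Siff by auto
    then have "j \<in> Eset (skew \<beta> \<alpha>)" unfolding Eset_def by blast
    then show False using jE by simp
  qed
  define R1 where "R1 = length \<beta> - i"
  define R2 where "R2 = length \<beta> - i'"
  have R12: "R2 < R1" using b1 b2 ii Siff by (auto simp: R1_def R2_def)
  have R1a: "L 0 R1 < j" "L N R1 = j" using b1 Siff notE[of R1] L0 LN by (auto simp: R1_def)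
  have r2: "Lf \<alpha> R2 < j+1" "j+1 \<le> Lf \<beta> R2" using b2 Siff by (auto simp: R2_def)
  then have "\<not> Lf \<alpha> R2 < j" using notE[of R2] by auto
  then have R2a: "L 0 R2 = j" "j + 1 \<le> L N R2" using r2 L0 LN by auto
  have TN: "T0 < N" using T0 pN by simp
  obtain R0 where R0: "L T0 R0 = j - 1" "L (Suc T0) = (L T0)(R0 := j)" "1 \<le> j"
      "(2 \<le> j \<longrightarrow> (\<forall>b'>R0. L T0 b' \<noteq> j - 1))" "(j = 1 \<longrightarrow> (\<forall>b'>R0. L T0 b' = 0))"
    using LL_step[OF fin, of T0] TN T0(2) unfolding L_def N_def by auto
  have R0N: "L N R0 = j"
  proof -
    have "L 0 R0 \<le> L T0 R0" using mono TN by simp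
    then have "Lf \<beta> R0 \<le> j" using notE[of R0] R0(1,3) L0 by simp
    moreover have "L (Suc T0) R0 \<le> L N R0" using mono TN by simp
    ultimately show ?thesis using R0(2) LN by simp
  qed
  obtain T2 where T2: "T2 < N" "u!T2 = j + 1" "L T2 R2 = j" "\<forall>b'>R2. L T2 b' \<noteq> j"
    using LL_cross[OF fin, of 0 N R2 "j+1"] R2a R0(3) unfolding L_def N_def by auto
  obtain T1 where T1: "T1 < N" "u!T1 = j" "L T1 R1 = j - 1" "L (Suc T1) R1 = j"
    using LL_cross[OF fin, of 0 N R1 j] R1a unfolding L_def N_def by auto
  have T21: "T2 < T1"
  proof (rule ccontr)
    assume "\<not> T2 < T1"
    then have "T1 < T2" using T1(2) T2(2) by (cases "T1 = T2") auto
    then have "L (Suc T1) R1 \<le> L T2 R1" "L T2 R1 \<le> L N R1" using mono T2(1) by auto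
    then have "L T2 R1 = j" using T1(4) R1a(2) by simp
    then show False using T2(4) R12 by auto
  qed
  have T1p: "p \<le> T1"
  proof (rule ccontr)
    assume "\<not> p \<le> T1"
    then have "u!T2 < u!T1" using inc T21 by simp
    then show False using T1(2) T2(2) by simp
  qed
  have T02: "T0 < T2"
  proof (rule ccontr)
    assume "\<not> T0 < T2"
    then have "T2 < T0" using T0(2) T2(2) by (cases "T0 = T2") auto
    then have "u!T2 < u!T0" using inc T0(1) by simp
    then show False using T0(2) T2(2) by simp
  qed
  have "L (Suc T0) R0 \<le> L T2 R0" "L T2 R0 \<le> L N R0" using mono T02 T2(1) by auto
  then have LT2R0: "L T2 R0 = j" using R0(2) R0N by simp
  have R02: "R0 < R2"
  proof (rule ccontr)
    assume "\<not> R0 < R2"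
    moreover have "R0 \<noteq> R2"
    proof
      assume "R0 = R2"
      then have "L 0 R2 \<le> L T0 R0" using mono TN by simp
      then show False using R2a(1) R0(1,3) by simp
    qed
    ultimately have "R2 < R0" by simp
    then show False using T2(4) LT2R0 by auto
  qed
  show False
  proof (cases "j = 1")
    case True
    then have "L T0 R2 = 0" using R0(5) R02 by simp
    moreover have "L 0 R2 \<le> L T0 R2" using mono TN by simp
    ultimately show False using R2a(1) True by simp
  next
    case False
    then have j2: "2 \<le> j" using R0(3) by simp
    have "L T0 R1 \<noteq> j - 1" using R0(4) j2 R02 R12 by simp
    moreover have "L T0 R1 \<le> L T1 R1" using mono T0(1) T1p T1(1) by simp
    ultimately have lt: "L T0 R1 < j - 1" using T1(3) by simp
    obtain T3 where T3: "T0 \<le> T3" "T3 < T1" "u!T3 = j - 1"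
      using LL_cross[OF fin, of T0 T1 R1 "j - 1"] lt T1(1,3) T0(1) T1p unfolding L_def N_def by auto
    have "T0 \<noteq> T3" using T3(3) T0(2) j2 by auto
    then have "T0 < T3" using T3(1) by simp
    show False
    proof (cases "T3 < p")
      case True
      then have "u!T0 < u!T3" using inc \<open>T0 < T3\<close> by simp
      then show False using T0(2) T3(3) by simp
    next
      case False
      then have "u!T1 \<le> u!T3" using dec T3(2) T1(1) by simp
      then show False using T1(2) T3(3) j2 by simp
    qed
  qed
qed

end
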